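(* Let $\Bbbk$ be a field of characteristic zero, let $V$ be a finite-dimensional $\Bbbk$-vector space, let $m\ge 2$, and for each $\ell=2,\dots,m$ let $\Psi_\ell:V^{\ell}\to V$ be a symmetric $\Bbbk$-multilinear map. Consider the polynomial map $F:V\to V$, $F(x)=x-\sum_{\ell=2}^m\Psi_\ell(x,\dots,x)$, and the algebra $A=(V,\{\Psi_\ell\}_{\ell=2}^m)$. Then $F$ is invertible (i.e. is a polynomial automorphism of $V$) if and only if $A$ is a Yagzhev algebra of some order $q_0$, i.e. if and only if there is $q_0$ such that for every $q\ge q_0$ and every $a\in A$ one has $\sum_{|t|=q}t(a)=0$.
   Context: Terms are formal expressions defined inductively: the symbol $x$ is a term with $|x|=1$; if $t_1,\dots,t_\ell$ are terms and $2\le \ell\le m$, then $\Psi_\ell(t_1,\dots,t_\ell)$ is a term with $|\Psi_\ell(t_1,\dots,t_\ell)|=|t_1|+\dots+|t_\ell|$. Different formal expressions are different terms even if they define the same element (e.g. $\Psi_2(x,\Psi_3(x,x,x))$ and $\Psi_2(\Psi_3(x,x,x),x)$ are distinct terms); $|t|$ is the number of occurrences of $x$ in $t$. For $a\in A$, $t(a)$ denotes the element obtained by substituting $a$ for $x$ and evaluating. The sum $\sum_{|t|=q}$ runs over all (finitely many) terms $t$ with $|t|=q$. The algebra $A$ is called a Yagzhev algebra of order $q_0$ if $\sum_{|t|=q}t(a)=0$ for all $a\in A$ and all $q\ge q_0$. *)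

theory Defs
  imports Main "HOL.Vector_Spaces" "HOL-Library.Multiset"
begin

text \<open>Formal terms: X is the variable x; Op [t1,...,tl] is Psi_l(t1,...,tl).\<close>
datatype yterm = X | Op "yterm list"

fun wf_term :: "nat \<Rightarrow> yterm \<Rightarrow> bool" where
  "wf_term m X = True"
| "wf_term m (Op ts) = (2 \<le> length ts \<and> length ts \<le> m \<and> (\<forall>t\<in>set ts. wf_term m t))"

fun tsize :: "yterm \<Rightarrow> nat" where
  "tsize X = 1"
| "tsize (Op ts) = sum_list (map tsize ts)"

fun teval :: "(nat \<Rightarrow> 'v list \<Rightarrow> 'v) \<Rightarrow> yterm \<Rightarrow> 'v \<Rightarrow> 'v" where
  "teval Psi X a = a"
| "teval Psi (Op ts) a = Psi (length ts) (map (\<lambda>t. teval Psi t a) ts)"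

definition terms_of_size :: "nat \<Rightarrow> nat \<Rightarrow> yterm set" where
  "terms_of_size m q = {t. wf_term m t \<and> tsize t = q}"

definition multilinear :: "('k \<Rightarrow> 'v \<Rightarrow> 'v) \<Rightarrow> nat \<Rightarrow> ('v::ab_group_add list \<Rightarrow> 'v) \<Rightarrow> bool" where
  "multilinear scale n f \<longleftrightarrow>
     (\<forall>xs i a b. length xs = n \<and> i < n \<longrightarrow> f (xs[i := a + b]) = f (xs[i := a]) + f (xs[i := b])) \<and>
     (\<forall>xs i c a. length xs = n \<and> i < n \<longrightarrow> f (xs[i := scale c a]) = scale c (f (xs[i := a])))"

definition symmetric_map :: "nat \<Rightarrow> ('v list \<Rightarrow> 'w) \<Rightarrow> bool" where
  "symmetric_map n f \<longleftrightarrow> (\<forall>xs ys. length xs = n \<and> mset ys = mset xs \<longrightarrow> f ys = f xs)"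

text \<open>Polynomial maps V -> V: finite sums of homogeneous components Phi_l(x,...,x)
  with Phi_l multilinear (Phi_0 a constant).\<close>
definition poly_map :: "('k \<Rightarrow> 'v \<Rightarrow> 'v) \<Rightarrow> ('v::ab_group_add \<Rightarrow> 'v) \<Rightarrow> bool" where
  "poly_map scale G \<longleftrightarrow> (\<exists>d Phi. (\<forall>l\<le>d. multilinear scale l (Phi l)) \<and>
       G = (\<lambda>x. \<Sum>l\<le>d. Phi l (replicate l x)))"

definition poly_automorphism :: "('k \<Rightarrow> 'v \<Rightarrow> 'v) \<Rightarrow> ('v::ab_group_add \<Rightarrow> 'v) \<Rightarrow> bool" where
  "poly_automorphism scale F \<longleftrightarrow> poly_map scale F \<and>
     (\<exists>G. poly_map scale G \<and> (\<forall>x. G (F x) = x) \<and> (\<forall>x. F (G x) = x))"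

definition yagzhev_of_order :: "nat \<Rightarrow> (nat \<Rightarrow> 'v::comm_monoid_add list \<Rightarrow> 'v) \<Rightarrow> nat \<Rightarrow> bool" where
  "yagzhev_of_order m Psi q0 \<longleftrightarrow>
     (\<forall>q\<ge>q0. \<forall>a. (\<Sum>t\<in>terms_of_size m q. teval Psi t a) = 0)"

end

theory Submission
  imports Defs "HOL-Computational_Algebra.Polynomial"
begin


lemma ml_add:
  assumes "multilinear scale n f" "length xs + length ys + 1 = n"
  shows "f (xs @ (a+b) # ys) = f (xs @ a # ys) + f (xs @ b # ys)"
proof -
  have "f ((xs @ c # ys)[length xs := a + b]) = f ((xs @ c # ys)[length xs := a]) + f ((xs @ c # ys)[length xs := b])" for c
    using assms unfolding multilinear_def by (metis length_append_singleton length_append length_Cons add_Suc_right Suc_eq_plus1 less_add_Suc1)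
  then show ?thesis by simp
qed

lemma ml_scale:
  assumes "multilinear scale n f" "length xs + length ys + 1 = n"
  shows "f (xs @ scale c a # ys) = scale c (f (xs @ a # ys))"
proof -
  have "f ((xs @ d # ys)[length xs := scale c a]) = scale c (f ((xs @ d # ys)[length xs := a]))" for d
    using assms unfolding multilinear_def by (metis length_append length_Cons add_Suc_right Suc_eq_plus1 less_add_Suc1)
  then show ?thesis by simp
qed

lemma ml_intro:
  fixes scale :: "'k \<Rightarrow> 'v::ab_group_add \<Rightarrow> 'v" and f :: "'v list \<Rightarrow> 'v"
  assumes "\<And>xs ys a b. length xs + length ys + 1 = n \<Longrightarrow> f (xs @ (a+b) # ys) = f (xs @ a # ys) + f (xs @ b # ys)"
    and "\<And>xs ys c a. length xs + length ys + 1 = n \<Longrightarrow> f (xs @ scale c a # ys) = scale c (f (xs @ a # ys))"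
  shows "multilinear scale n f"
  unfolding multilinear_def
proof (intro conjI allI impI)
  fix zs :: "'v list" and i a b assume h: "length zs = n \<and> i < n"
  have l: "length (take i zs) + length (drop (Suc i) zs) + 1 = n" using h by auto
  show "f (zs[i := a + b]) = f (zs[i := a]) + f (zs[i := b])"
    using h assms(1)[OF l] by (simp add: upd_conv_take_nth_drop)
next
  fix zs :: "'v list" and i c a assume h: "length zs = n \<and> i < n"
  have l: "length (take i zs) + length (drop (Suc i) zs) + 1 = n" using h by auto
  show "f (zs[i := scale c a]) = scale c (f (zs[i := a]))"
    using h assms(2)[OF l] by (simp add: upd_conv_take_nth_drop)
qed

locale yz = finite_dimensional_vector_space scale B
  for scale :: "'k::field_char_0 \<Rightarrow> 'v::ab_group_add \<Rightarrow> 'v" and B :: "'v set" +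
  fixes m :: nat and Psi :: "nat \<Rightarrow> 'v list \<Rightarrow> 'v"
  assumes m2: "m \<ge> 2" and PsiML: "\<And>l. l \<in> {2..m} \<Longrightarrow> multilinear scale l (Psi l)"
begin

lemma ml_zero:
  assumes "multilinear scale n f" "length xs + length ys + 1 = n"
  shows "f (xs @ 0 # ys) = 0"
  using ml_scale[OF assms, of 0 0] by simp

lemma ml_diff:
  assumes "multilinear scale n f" "length xs + length ys + 1 = n"
  shows "f (xs @ (a-b) # ys) = f (xs @ a # ys) - f (xs @ b # ys)"
  using ml_add[OF assms, of "a-b" b] by (simp add: algebra_simps)

lemma ml_sum:
  assumes "multilinear scale n f" "length xs + length ys + 1 = n"
  shows "f (xs @ (\<Sum>t\<in>D. g t) # ys) = (\<Sum>t\<in>D. f (xs @ g t # ys))"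
proof (induction D rule: infinite_finite_induct)
  case (infinite A) then show ?case using ml_zero[OF assms] by simp
next
  case empty then show ?case using ml_zero[OF assms] by simp
next
  case (insert x F) then show ?case using ml_add[OF assms] by simp
qed

inductive lpoly :: "('k \<Rightarrow> 'v) \<Rightarrow> bool" where
  lpoly_const: "lpoly (\<lambda>x. c)"
| lpoly_add: "lpoly p \<Longrightarrow> lpoly q \<Longrightarrow> lpoly (\<lambda>x. p x + q x)"
| lpoly_x: "lpoly p \<Longrightarrow> lpoly (\<lambda>x. scale x (p x))"

lemma lpoly_0: "lpoly (\<lambda>x. 0)" by (rule lpoly_const)

lemma lpoly_neg: "lpoly p \<Longrightarrow> lpoly (\<lambda>x. - p x)"
proof (induction rule: lpoly.induct)
  case (lpoly_const c) then show ?case by (rule lpoly.lpoly_const)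
next
  case (lpoly_add p q)
  have "lpoly (\<lambda>x. - p x + - q x)" by (rule lpoly.lpoly_add[OF lpoly_add.IH])
  then show ?case by (simp add: add.commute)
next
  case (lpoly_x p)
  have "lpoly (\<lambda>x. scale x (- p x))" by (rule lpoly.lpoly_x[OF lpoly_x.IH])
  then show ?case by simp
qed

lemma lpoly_diff: "lpoly p \<Longrightarrow> lpoly q \<Longrightarrow> lpoly (\<lambda>x. p x - q x)"
proof -
  assume "lpoly p" "lpoly q"
  then have "lpoly (\<lambda>x. p x + - q x)" by (intro lpoly_add lpoly_neg)
  then show ?thesis by simp
qed

lemma lpoly_smul: "lpoly p \<Longrightarrow> lpoly (\<lambda>x. scale c (p x))"
proof (induction rule: lpoly.induct)
  case (lpoly_const d) then show ?case by (rule lpoly.lpoly_const)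
next
  case (lpoly_add p q)
  have "lpoly (\<lambda>x. scale c (p x) + scale c (q x))" by (rule lpoly.lpoly_add[OF lpoly_add.IH])
  then show ?case by (simp add: scale_right_distrib)
next
  case (lpoly_x p)
  have "lpoly (\<lambda>x. scale x (scale c (p x)))" by (rule lpoly.lpoly_x[OF lpoly_x.IH])
  then show ?case by (simp add: mult.commute)
qed

lemma lpoly_pow: "lpoly p \<Longrightarrow> lpoly (\<lambda>x. scale (x^N) (p x))"
proof (induction N)
  case 0 then show ?case by simp
next
  case (Suc N) then show ?case using lpoly_x[of "\<lambda>x. scale (x^N) (p x)"] by simp
qed

lemma lpoly_sum: "(\<And>i. i \<in> I \<Longrightarrow> lpoly (p i)) \<Longrightarrow> lpoly (\<lambda>x. \<Sum>i\<in>I. p i x)"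
proof (induction I rule: infinite_finite_induct)
  case (infinite A) then show ?case by (simp add: lpoly_0)
next
  case empty then show ?case by (simp add: lpoly_0)
next
  case (insert i F) then show ?case using lpoly_add[of "p i" "\<lambda>x. \<Sum>i\<in>F. p i x"] by simp
qed

lemma lpoly_eval0: "lpoly p \<Longrightarrow> \<exists>r. lpoly r \<and> (\<forall>x. p x = p 0 + scale x (r x))"
proof (induction rule: lpoly.induct)
  case (lpoly_const c) then show ?case using lpoly_0 by auto
next
  case (lpoly_add p q)
  then obtain r1 r2 where "lpoly r1" "\<forall>x. p x = p 0 + scale x (r1 x)" "lpoly r2" "\<forall>x. q x = q 0 + scale x (r2 x)" by blast
  note h = this
  have "lpoly (\<lambda>x. r1 x + r2 x)" by (rule lpoly.lpoly_add) (fact h)+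
  moreover have "p x + q x = (p 0 + q 0) + scale x (r1 x + r2 x)" for x
  proof -
    have e1: "p x = p 0 + scale x (r1 x)" and e2: "q x = q 0 + scale x (r2 x)" using h by blast+
    show ?thesis by (simp only: e1 e2 scale_right_distrib add_ac)
  qed
  ultimately show ?case by blast
next
  case (lpoly_x p) then show ?case by (intro exI[of _ p]) simp
qed

definition lord :: "nat \<Rightarrow> ('k \<Rightarrow> 'v) \<Rightarrow> bool" where
  "lord N p \<longleftrightarrow> (\<exists>r. lpoly r \<and> (\<forall>x. p x = scale (x^N) (r x)))"

lemma lord_lpoly: "lord N p \<Longrightarrow> lpoly p"
proof -
  assume "lord N p"
  then obtain r where "lpoly r" "\<forall>x. p x = scale (x^N) (r x)" unfolding lord_def by blast
  moreover then have "p = (\<lambda>x. scale (x^N) (r x))" by (simp add: fun_eq_iff)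
  ultimately show "lpoly p" using lpoly_pow by simp
qed

lemma lord_0: "lord 0 p \<longleftrightarrow> lpoly p"
proof
  assume "lord 0 p"
  then obtain r where "lpoly r" "\<forall>x. p x = r x" unfolding lord_def by auto
  moreover then have "p = r" by (simp add: fun_eq_iff)
  ultimately show "lpoly p" by simp
next
  assume "lpoly p" then show "lord 0 p" unfolding lord_def by auto
qed

lemma lord_zero: "lord N (\<lambda>x. 0)"
  unfolding lord_def by (intro exI[of _ "\<lambda>x. 0"] conjI lpoly_0) simp

lemma lord_mono: "lord N p \<Longrightarrow> M \<le> N \<Longrightarrow> lord M p"
  unfolding lord_def
proof (elim exE conjE)
  fix r assume "lpoly r" "\<forall>x. p x = scale (x^N) (r x)" "M \<le> N"
  moreover have "x^M * x^(N-M) = x^N" for x :: 'k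
  proof -
    have "M + (N - M) = N" using \<open>M \<le> N\<close> by simp
    then show ?thesis by (metis power_add)
  qed
  ultimately have "\<forall>x. p x = scale (x^M) (scale (x^(N-M)) (r x))"
    by simp
  then show "\<exists>r. lpoly r \<and> (\<forall>x. p x = scale (x ^ M) (r x))" using lpoly_pow[OF \<open>lpoly r\<close>] by blast
qed

lemma lord_add: "lord N p \<Longrightarrow> lord N q \<Longrightarrow> lord N (\<lambda>x. p x + q x)"
proof -
  assume "lord N p" "lord N q"
  then obtain r1 r2 where "lpoly r1" "\<forall>x. p x = scale (x^N) (r1 x)" "lpoly r2" "\<forall>x. q x = scale (x^N) (r2 x)"
    unfolding lord_def by blast
  then show ?thesis unfolding lord_def
    using lpoly_add[of r1 r2] by (intro exI[of _ "\<lambda>x. r1 x + r2 x"]) (simp add: scale_right_distrib)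
qed

lemma lord_neg: "lord N p \<Longrightarrow> lord N (\<lambda>x. - p x)"
proof -
  assume "lord N p"
  then obtain r1 where "lpoly r1" "\<forall>x. p x = scale (x^N) (r1 x)"
    unfolding lord_def by blast
  then show ?thesis unfolding lord_def
    using lpoly_neg[of r1] by (intro exI[of _ "\<lambda>x. - r1 x"]) simp
qed

lemma lord_diff: "lord N p \<Longrightarrow> lord N q \<Longrightarrow> lord N (\<lambda>x. p x - q x)"
proof -
  assume "lord N p" "lord N q"
  then have "lord N (\<lambda>x. p x + - q x)" by (intro lord_add lord_neg)
  then show ?thesis by simp
qed

lemma lord_sum: "(\<And>i. i \<in> I \<Longrightarrow> lord N (p i)) \<Longrightarrow> lord N (\<lambda>x. \<Sum>i\<in>I. p i x)"
proof (induction I rule: infinite_finite_induct)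
  case (infinite A) then show ?case by (simp add: lord_zero)
next
  case empty then show ?case by (simp add: lord_zero)
next
  case (insert i F) then show ?case using lord_add[of N "p i" "\<lambda>x. \<Sum>i\<in>F. p i x"] by simp
qed

lemma lord_pow: "lord N p \<Longrightarrow> lord (M + N) (\<lambda>x. scale (x^M) (p x))"
proof -
  assume "lord N p"
  then obtain r where "lpoly r" "\<forall>x. p x = scale (x^N) (r x)" unfolding lord_def by blast
  then show ?thesis unfolding lord_def by (intro exI[of _ r]) (simp add: power_add)
qed

lemma lord_monom: "lord N (\<lambda>x. scale (x^N) c)"
  unfolding lord_def using lpoly_const by blast

lemma lord_monom': "N \<le> M \<Longrightarrow> lord N (\<lambda>x. scale (x^M) c)"
  using lord_mono[OF lord_monom] by blast

abbreviation coord :: "'v \<Rightarrow> 'v \<Rightarrow> 'k" where "coord v b \<equiv> representation B v b"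

lemma coord_add: "coord (u + v) b = coord u b + coord v b"
  using representation_add[OF independent_Basis] span_Basis by auto

lemma coord_scale: "coord (scale c v) b = c * coord v b"
  using representation_scale[OF independent_Basis] span_Basis by auto

lemma coord_sum: "coord (\<Sum>i\<in>I. f i) b = (\<Sum>i\<in>I. coord (f i) b)"
  using representation_sum[OF independent_Basis, of I f] span_Basis by auto

lemma coord_eq0: "(\<And>b. coord v b = 0) \<Longrightarrow> v = 0"
  using sum_representation_eq[OF independent_Basis _ finite_Basis subset_refl, of v] span_Basis by simp

lemma lpoly_coord: "lpoly p \<Longrightarrow> \<exists>P. \<forall>x. coord (p x) b = poly P x"
proof (induction rule: lpoly.induct)
  case (lpoly_const c) then show ?case by (intro exI[of _ "[:coord c b:]"]) simp
next
  case (lpoly_add p q)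
  then obtain P Q where h: "\<forall>x. coord (p x) b = poly P x" "\<forall>x. coord (q x) b = poly Q x" by blast
  have "coord (p x + q x) b = poly (P + Q) x" for x using h by (simp only: coord_add poly_add)
  then show ?case by blast
next
  case (lpoly_x p)
  then obtain P where h: "\<forall>x. coord (p x) b = poly P x" by blast
  have "coord (scale x (p x)) b = poly ([:0,1:] * P) x" for x
    using h by (simp add: coord_scale)
  then show ?case by blast
qed

lemma coeff_compare:
  assumes eq: "\<And>x. (\<Sum>j\<le>n. scale (x^j) (c j)) = scale (x^N) (r x)"
    and r: "lpoly r" and j: "j < N" "j \<le> n"
  shows "c j = 0"
proof (rule coord_eq0)
  fix b
  obtain Q where Q: "\<forall>x. coord (r x) b = poly Q x" using lpoly_coord[OF r] by blast
  define P where "P = (\<Sum>i\<le>n. monom (coord (c i) b) i)"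
  have "poly P x = poly (monom 1 N * Q) x" for x
  proof -
    have "poly P x = coord (\<Sum>j\<le>n. scale (x^j) (c j)) b"
      by (simp add: P_def poly_sum poly_monom coord_sum coord_scale mult.commute)
    also have "\<dots> = poly (monom 1 N * Q) x" using eq Q by (simp add: coord_scale poly_monom)
    finally show ?thesis .
  qed
  then have "P = monom 1 N * Q" using poly_eq_poly_eq_iff by blast
  then have "coeff P j = 0" using j by (simp add: coeff_monom_mult)
  moreover have "coeff P j = coord (c j) b"
    using j by (simp add: P_def coeff_sum coeff_monom)
  ultimately show "coord (c j) b = 0" by simp
qed

lemma lord_all_zero:
  assumes p: "lpoly p" and o: "\<And>N. lord N p"
  shows "p x = 0"
proof (rule coord_eq0)
  fix b
  obtain P where P: "\<forall>x. coord (p x) b = poly P x" using lpoly_coord[OF p] by blast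
  have "coeff P j = 0" for j
  proof -
    obtain r where r: "lpoly r" "\<forall>x. p x = scale (x^(Suc j)) (r x)" using o[of "Suc j"] unfolding lord_def by blast
    obtain Q where Q: "\<forall>x. coord (r x) b = poly Q x" using lpoly_coord[OF r(1)] by blast
    have "poly P = poly (monom 1 (Suc j) * Q)"
      using P Q r(2) by (auto simp: coord_scale poly_monom)
    then have "P = monom 1 (Suc j) * Q" using poly_eq_poly_eq_iff by blast
    then show ?thesis by (simp add: coeff_monom_mult)
  qed
  then have "P = 0" by (simp add: poly_eqI)
  then show "coord (p x) b = 0" using P by simp
qed

end


context yz begin

lemma ml_scale_list:
  assumes f: "multilinear scale n f"
  shows "length xs + length ps = n \<Longrightarrow>
    f (xs @ map (\<lambda>(c,y). scale c y) ps) = scale (prod_list (map fst ps)) (f (xs @ map snd ps))"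
proof (induction ps arbitrary: xs)
  case Nil then show ?case by simp
next
  case (Cons cy ps)
  obtain c y where cy: "cy = (c,y)" by fastforce
  have "f (xs @ map (\<lambda>(c,y). scale c y) (cy # ps)) = f ((xs @ [scale c y]) @ map (\<lambda>(c,y). scale c y) ps)"
    by (simp add: cy)
  also have "\<dots> = scale (prod_list (map fst ps)) (f ((xs @ [scale c y]) @ map snd ps))"
    using Cons.IH[of "xs @ [scale c y]"] Cons.prems by simp
  also have "f ((xs @ [scale c y]) @ map snd ps) = scale c (f (xs @ y # map snd ps))"
    using ml_scale[OF f, of xs "map snd ps" c y] Cons.prems by simp
  finally show ?case by (simp add: cy mult.commute)
qed

lemma ml_rep_scale:
  assumes f: "multilinear scale l f"
  shows "f (replicate l (scale c a)) = scale (c^l) (f (replicate l a))"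
proof -
  have "f ([] @ map (\<lambda>(c,y). scale c y) (replicate l (c,a))) = scale (prod_list (map fst (replicate l (c,a)))) (f ([] @ map snd (replicate l (c,a))))"
    by (rule ml_scale_list[OF f]) simp
  then show ?thesis by (simp add: prod_list_replicate)
qed

lemma lpoly_ml:
  assumes f: "multilinear scale n f"
  shows "(\<forall>p\<in>set ps. lpoly p) \<Longrightarrow> length ps + length cs = n \<Longrightarrow> lpoly (\<lambda>x. f (map (\<lambda>p. p x) ps @ cs))"
proof (induction ps arbitrary: cs rule: rev_induct)
  case Nil then show ?case by (simp add: lpoly_const)
next
  case (snoc p ps)
  have lp: "lpoly p" using snoc.prems by simp
  have len: "length (map (\<lambda>p. p x) ps) + length cs + 1 = n" for x using snoc.prems by simp
  have "lpoly (\<lambda>x. f (map (\<lambda>p. p x) ps @ p x # cs))"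
    using lp
  proof (induction rule: lpoly.induct)
    case (lpoly_const c)
    then show ?case using snoc.IH[of "c # cs"] snoc.prems by simp
  next
    case (lpoly_add p q)
    have "lpoly (\<lambda>x. f (map (\<lambda>p. p x) ps @ p x # cs) + f (map (\<lambda>p. p x) ps @ q x # cs))"
      by (rule lpoly.lpoly_add) (fact lpoly_add.IH)+
    then show ?case using ml_add[OF f len] by simp
  next
    case (lpoly_x p)
    have "lpoly (\<lambda>x. scale x (f (map (\<lambda>p. p x) ps @ p x # cs)))"
      by (rule lpoly.lpoly_x) (fact lpoly_x.IH)
    then show ?case using ml_scale[OF f len] by simp
  qed
  then show ?case by simp
qed

lemma lpoly_ml':
  assumes f: "multilinear scale n f" "\<forall>p\<in>set ps. lpoly p" "length ps = n"
  shows "lpoly (\<lambda>x. f (map (\<lambda>p. p x) ps))"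
  using lpoly_ml[OF assms(1,2), of "[]"] assms(3) by simp

lemma lord_ml:
  assumes f: "multilinear scale n f"
  shows "(\<forall>p\<in>set pre. lpoly p) \<Longrightarrow> (\<forall>(N,p)\<in>set qs. lord N p) \<Longrightarrow> length pre + length qs = n \<Longrightarrow>
    lord (sum_list (map fst qs)) (\<lambda>x. f (map (\<lambda>p. p x) pre @ map (\<lambda>(N,p). p x) qs))"
proof (induction qs arbitrary: pre)
  case Nil then show ?case using lpoly_ml'[OF f, of pre] by (simp add: lord_0)
next
  case (Cons Np qs)
  obtain N p where Np: "Np = (N,p)" by fastforce
  obtain r where r: "lpoly r" "\<forall>x. p x = scale (x^N) (r x)" using Cons.prems Np unfolding lord_def by auto
  have IH: "lord (sum_list (map fst qs)) (\<lambda>x. f (map (\<lambda>p. p x) (pre @ [r]) @ map (\<lambda>(N,p). p x) qs))"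
    using Cons.IH[of "pre @ [r]"] Cons.prems r(1) Np by auto
  have len: "length (map (\<lambda>p. p x) pre) + length (map (\<lambda>(N,p). p x) qs) + 1 = n" for x
    using Cons.prems Np by simp
  have eq: "f (map (\<lambda>p. p x) pre @ map (\<lambda>(N,p). p x) (Np # qs)) =
      scale (x^N) (f (map (\<lambda>p. p x) (pre @ [r]) @ map (\<lambda>(N,p). p x) qs))" for x
    using ml_scale[OF f len[of x], of "x^N" "r x"] r(2) Np by simp
  have "(\<lambda>x. f (map (\<lambda>p. p x) pre @ map (\<lambda>(N,p). p x) (Np # qs))) =
      (\<lambda>x. scale (x^N) (f (map (\<lambda>p. p x) (pre @ [r]) @ map (\<lambda>(N,p). p x) qs)))"
    using eq by (rule ext)
  moreover have "sum_list (map fst (Np # qs)) = N + sum_list (map fst qs)" using Np by simp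
  ultimately show ?case using lord_pow[OF IH, of N] by simp
qed

lemma lord_ml_diff:
  assumes f: "multilinear scale l f" and u: "lord A u" and v: "lord A v" and uv: "lord N (\<lambda>x. u x - v x)"
  shows "lord (N + (l - 1) * A) (\<lambda>x. f (replicate l (u x)) - f (replicate l (v x)))"
proof -
  have lu: "lpoly u" and lv: "lpoly v" using u v lord_lpoly by blast+
  have "\<forall>i. i + j = l \<longrightarrow> lord (N + (i + j - 1) * A)
     (\<lambda>x. f (replicate i (v x) @ replicate j (u x)) - f (replicate i (v x) @ replicate j (v x)))" for j
  proof (induction j)
    case 0 then show ?case by (simp add: lord_zero)
  next
    case (Suc j)
    show ?case
    proof (intro allI impI)
      fix i assume ij: "i + Suc j = l"
      define qs where "qs = replicate i (A, v) @ (N, \<lambda>x. u x - v x) # replicate j (A, u)"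
      have "lord (sum_list (map fst qs)) (\<lambda>x. f (map (\<lambda>p. p x) [] @ map (\<lambda>(N,p). p x) qs))"
        using ij by (intro lord_ml[OF f]) (auto simp: qs_def u v uv)
      moreover have "sum_list (map fst qs) = N + (i + Suc j - 1) * A"
        by (simp add: qs_def sum_list_replicate algebra_simps)
      moreover have "map (\<lambda>(N,p). p x) qs = replicate i (v x) @ (u x - v x) # replicate j (u x)" for x
        by (simp add: qs_def)
      ultimately have L1: "lord (N + (i + j) * A) (\<lambda>x. f (replicate i (v x) @ (u x - v x) # replicate j (u x)))"
        by simp
      have L2: "lord (N + (i + j) * A)
        (\<lambda>x. f (replicate (Suc i) (v x) @ replicate j (u x)) - f (replicate (Suc i) (v x) @ replicate j (v x)))"
        using Suc.IH[rule_format, of "Suc i"] ij by (simp del: replicate_Suc)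
      have len: "length (replicate i (v x)) + length (replicate j (u x)) + 1 = l" for x using ij by simp
      have eq: "f (replicate i (v x) @ replicate (Suc j) (u x)) - f (replicate i (v x) @ replicate (Suc j) (v x))
        = f (replicate i (v x) @ (u x - v x) # replicate j (u x)) +
          (f (replicate (Suc i) (v x) @ replicate j (u x)) - f (replicate (Suc i) (v x) @ replicate j (v x)))" for x
      proof -
        have d1: "f (replicate i (v x) @ (u x - v x) # replicate j (u x)) = f (replicate i (v x) @ u x # replicate j (u x)) - f (replicate i (v x) @ v x # replicate j (u x))"
          by (rule ml_diff[OF f len[of x]])
        have e1: "replicate (Suc i) (v x) @ ys = replicate i (v x) @ v x # ys" for ys
          by (simp add: replicate_app_Cons_same)
        have e2: "replicate (Suc j) y = y # replicate j y" for y :: 'v by simp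
        show ?thesis unfolding d1 e1 e2 by (simp add: algebra_simps)
      qed
      have ee: "i + Suc j - 1 = i + j" by simp
      show "lord (N + (i + Suc j - 1) * A)
        (\<lambda>x. f (replicate i (v x) @ replicate (Suc j) (u x)) - f (replicate i (v x) @ replicate (Suc j) (v x)))"
        unfolding ee
      proof -
        have fe: "(\<lambda>x. f (replicate i (v x) @ replicate (Suc j) (u x)) - f (replicate i (v x) @ replicate (Suc j) (v x))) =
          (\<lambda>x. f (replicate i (v x) @ (u x - v x) # replicate j (u x)) +
          (f (replicate (Suc i) (v x) @ replicate j (u x)) - f (replicate (Suc i) (v x) @ replicate j (v x))))"
          by (rule ext) (rule eq)
        show "lord (N + (i + j) * A)
          (\<lambda>x. f (replicate i (v x) @ replicate (Suc j) (u x)) - f (replicate i (v x) @ replicate (Suc j) (v x)))"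
          unfolding fe by (rule lord_add[OF L1 L2])
      qed
    qed
  qed
  from this[of l, rule_format, of 0] show ?thesis by simp
qed

end



lemma wf_size_pos: "wf_term m t \<Longrightarrow> 1 \<le> tsize t"
proof (induction t)
  case X then show ?case by simp
next
  case (Op ts)
  then obtain t where t: "t \<in> set ts" by (cases ts) auto
  then have "1 \<le> tsize t" using Op by auto
  also have "tsize t \<le> sum_list (map tsize ts)" using t by (simp add: member_le_sum_list)
  finally show ?case by simp
qed

lemma child_size_lt:
  assumes "wf_term m (Op ts)" "t \<in> set ts"
  shows "tsize t < tsize (Op ts)"
proof -
  have "sum_list (map tsize ts) = tsize t + sum_list (map tsize (remove1 t ts))"
    using assms(2) by (rule sum_list_map_remove1)
  moreover have "remove1 t ts \<noteq> []"
    using assms by (cases ts) (auto simp: length_remove1)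
  then obtain t' where t': "t' \<in> set (remove1 t ts)" by (cases "remove1 t ts") auto
  then have "t' \<in> set ts" using set_remove1_subset by fastforce
  then have "1 \<le> tsize t'" using assms wf_size_pos by auto
  moreover have "tsize t' \<le> sum_list (map tsize (remove1 t ts))" using t' by (simp add: member_le_sum_list)
  ultimately show ?thesis by simp
qed

lemma prod_list_pow: "prod_list (map (\<lambda>t. c ^ f t) ts) = (c::'a::comm_monoid_mult) ^ sum_list (map f ts)"
  by (induction ts) (simp_all add: power_add)

context yz begin

primrec Dset :: "nat \<Rightarrow> yterm set" where
  "Dset 0 = {X}"
| "Dset (Suc k) = insert X (\<Union>l\<in>{2..m}. Op ` {ts. set ts \<subseteq> Dset k \<and> length ts = l})"

lemma finite_Dset: "finite (Dset k)"
  by (induction k) (auto intro!: finite_lists_length_eq)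

lemma Dset_wf: "t \<in> Dset k \<Longrightarrow> wf_term m t"
proof (induction k arbitrary: t)
  case 0 then show ?case by simp
next
  case (Suc k)
  then show ?case by (auto simp: subset_iff)
qed

lemma in_Dset: "wf_term m t \<Longrightarrow> tsize t \<le> k + 1 \<Longrightarrow> t \<in> Dset k"
proof (induction t arbitrary: k)
  case X then show ?case by (cases k) auto
next
  case (Op ts)
  obtain t0 where t0: "t0 \<in> set ts" using Op.prems(1) by (cases ts) auto
  have "1 \<le> tsize t0" using t0 Op.prems(1) wf_size_pos by auto
  moreover have "tsize t0 < tsize (Op ts)" by (rule child_size_lt[OF Op.prems(1) t0])
  ultimately have "2 \<le> tsize (Op ts)" by simp
  then obtain k' where k: "k = Suc k'" using Op.prems(2) by (cases k) auto
  have "\<forall>t\<in>set ts. t \<in> Dset k'"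
  proof
    fix t assume t: "t \<in> set ts"
    have "tsize t < tsize (Op ts)" by (rule child_size_lt[OF Op.prems(1) t])
    then have "tsize t \<le> k' + 1" using Op.prems(2) k by simp
    then show "t \<in> Dset k'" using Op.IH[OF t] Op.prems(1) t by simp
  qed
  then have "Op ts \<in> Op ` {us. set us \<subseteq> Dset k' \<and> length us = length ts}" by auto
  then show ?case unfolding k Dset.simps using Op.prems(1) by (intro insertI2 UN_I[of "length ts"]) auto
qed

lemma terms_of_size_sub: "q \<le> k + 1 \<Longrightarrow> terms_of_size m q \<subseteq> Dset k"
  unfolding terms_of_size_def using in_Dset by auto

lemma finite_terms_of_size: "finite (terms_of_size m q)"
  using finite_subset[OF terms_of_size_sub[of q q] finite_Dset] by simp

lemma terms_of_size_0: "terms_of_size m 0 = {}"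
  unfolding terms_of_size_def using wf_size_pos by fastforce

lemma teval_hom: "wf_term m t \<Longrightarrow> teval Psi t (scale c a) = scale (c ^ tsize t) (teval Psi t a)"
proof (induction t)
  case X then show ?case by simp
next
  case (Op ts)
  have ml: "multilinear scale (length ts) (Psi (length ts))" using Op.prems PsiML by simp
  have "teval Psi (Op ts) (scale c a) = Psi (length ts) (map (\<lambda>t. teval Psi t (scale c a)) ts)"
    by simp
  also have "\<dots> = Psi (length ts) (map (\<lambda>t. scale (c ^ tsize t) (teval Psi t a)) ts)"
    using Op.IH Op.prems by (intro arg_cong[where f="Psi (length ts)"] map_cong) auto
  also have "\<dots> = Psi (length ts) ([] @ map (\<lambda>(c,y). scale c y) (map (\<lambda>t. (c ^ tsize t, teval Psi t a)) ts))"
    by (simp add: comp_def)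
  also have "\<dots> = scale (prod_list (map fst (map (\<lambda>t. (c ^ tsize t, teval Psi t a)) ts)))
      (Psi (length ts) ([] @ map snd (map (\<lambda>t. (c ^ tsize t, teval Psi t a)) ts)))"
    by (rule ml_scale_list[OF ml]) simp
  also have "\<dots> = scale (c ^ tsize (Op ts)) (teval Psi (Op ts) a)"
    by (simp add: comp_def prod_list_pow)
  finally show ?case .
qed

lemma teval_zero: "wf_term m t \<Longrightarrow> teval Psi t 0 = 0"
proof (induction t)
  case X then show ?case by simp
next
  case (Op ts)
  have ml: "multilinear scale (length ts) (Psi (length ts))" using Op.prems PsiML by simp
  have "map (\<lambda>t. teval Psi t 0) ts = replicate (length ts) 0"
    using Op by (auto intro: map_replicate_const[symmetric, THEN trans] simp: map_idI list_eq_iff_nth_eq)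
  moreover have "replicate (length ts) (0::'v) = [] @ 0 # replicate (length ts - 1) 0"
    using Op.prems by (cases ts) auto
  ultimately have "teval Psi (Op ts) 0 = Psi (length ts) ([] @ 0 # replicate (length ts - 1) 0)" by simp
  also have "\<dots> = 0" using Op.prems by (intro ml_zero[OF ml]) auto
  finally show ?case .
qed

lemma lpoly_teval: "wf_term m t \<Longrightarrow> lpoly p \<Longrightarrow> lpoly (\<lambda>x. teval Psi t (p x))"
proof (induction t)
  case X then show ?case by simp
next
  case (Op ts)
  have ml: "multilinear scale (length ts) (Psi (length ts))" using Op.prems PsiML by simp
  have "lpoly (\<lambda>x. Psi (length ts) (map (\<lambda>q. q x) (map (\<lambda>t x. teval Psi t (p x)) ts)))"
    by (rule lpoly_ml'[OF ml]) (use Op in auto)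
  then show ?case by (simp add: comp_def)
qed

lemma ml_expand:
  assumes f: "multilinear scale n f" and D: "finite D"
  shows "length xs + l = n \<Longrightarrow> f (xs @ replicate l (\<Sum>t\<in>D. g t)) =
    (\<Sum>ts\<in>{ts. set ts \<subseteq> D \<and> length ts = l}. f (xs @ map g ts))"
proof (induction l arbitrary: xs)
  case 0
  have "{ts. set ts \<subseteq> D \<and> length ts = 0} = {[]}" by auto
  then show ?case by simp
next
  case (Suc l)
  let ?L = "\<lambda>l. {ts. set ts \<subseteq> D \<and> length ts = l}"
  have len: "length xs + length (replicate l (\<Sum>t\<in>D. g t)) + 1 = n" using Suc.prems by simp
  have "f (xs @ replicate (Suc l) (\<Sum>t\<in>D. g t)) = f (xs @ (\<Sum>t\<in>D. g t) # replicate l (\<Sum>t\<in>D. g t))"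
    by simp
  also have "\<dots> = (\<Sum>t\<in>D. f (xs @ g t # replicate l (\<Sum>t\<in>D. g t)))"
    by (rule ml_sum[OF f len])
  also have "\<dots> = (\<Sum>t\<in>D. \<Sum>ts\<in>?L l. f (xs @ g t # map g ts))"
  proof (rule sum.cong[OF refl])
    fix t assume "t \<in> D"
    have "f ((xs @ [g t]) @ replicate l (\<Sum>t\<in>D. g t)) = (\<Sum>ts\<in>?L l. f ((xs @ [g t]) @ map g ts))"
      by (rule Suc.IH) (use Suc.prems in simp)
    then show "f (xs @ g t # replicate l (\<Sum>t\<in>D. g t)) = (\<Sum>ts\<in>?L l. f (xs @ g t # map g ts))"
      by simp
  qed
  also have "\<dots> = (\<Sum>(t,ts)\<in>D \<times> ?L l. f (xs @ map g (t # ts)))"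
    by (simp add: sum.cartesian_product)
  also have "\<dots> = (\<Sum>ts\<in>?L (Suc l). f (xs @ map g ts))"
  proof -
    have "bij_betw (\<lambda>(t,ts). t # ts) (D \<times> ?L l) (?L (Suc l))"
      unfolding bij_betw_def
    proof
      show "inj_on (\<lambda>(t,ts). t # ts) (D \<times> ?L l)" by (auto simp: inj_on_def)
      show "(\<lambda>(t,ts). t # ts) ` (D \<times> ?L l) = ?L (Suc l)"
      proof
        show "(\<lambda>(t,ts). t # ts) ` (D \<times> ?L l) \<subseteq> ?L (Suc l)" by auto
        show "?L (Suc l) \<subseteq> (\<lambda>(t,ts). t # ts) ` (D \<times> ?L l)"
        proof
          fix us assume "us \<in> ?L (Suc l)"
          then obtain t ts where "us = t # ts" "t \<in> D" "ts \<in> ?L l" by (cases us) auto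
          then show "us \<in> (\<lambda>(t,ts). t # ts) ` (D \<times> ?L l)" by force
        qed
      qed
    qed
    from sum.reindex_bij_betw[OF this, of "\<lambda>ts. f (xs @ map g ts)"]
    show ?thesis by (simp add: case_prod_unfold)
  qed
  finally show ?case .
qed

definition xk :: "nat \<Rightarrow> 'v \<Rightarrow> 'v" where "xk k a = (\<Sum>t\<in>Dset k. teval Psi t a)"
definition Sq :: "nat \<Rightarrow> 'v \<Rightarrow> 'v" where "Sq q a = (\<Sum>t\<in>terms_of_size m q. teval Psi t a)"
definition PP :: "'v \<Rightarrow> 'v" where "PP y = (\<Sum>l=2..m. Psi l (replicate l y))"

lemma xk_rec: "xk (Suc k) a = a + PP (xk k a)"
proof -
  let ?L = "\<lambda>l. {ts. set ts \<subseteq> Dset k \<and> length ts = l}"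
  have fin: "finite (?L l)" for l by (rule finite_lists_length_eq[OF finite_Dset])
  have "X \<notin> (\<Union>l\<in>{2..m}. Op ` ?L l)" by auto
  then have "xk (Suc k) a = a + (\<Sum>t\<in>(\<Union>l\<in>{2..m}. Op ` ?L l). teval Psi t a)"
    unfolding xk_def using fin by (simp add: sum.insert)
  also have "(\<Sum>t\<in>(\<Union>l\<in>{2..m}. Op ` ?L l). teval Psi t a) = (\<Sum>l=2..m. \<Sum>t\<in>Op ` ?L l. teval Psi t a)"
    by (rule sum.UNION_disjoint) (auto simp: fin)
  also have "\<dots> = (\<Sum>l=2..m. \<Sum>ts\<in>?L l. Psi l (map (\<lambda>t. teval Psi t a) ts))"
  proof (rule sum.cong[OF refl])
    fix l
    have "(\<Sum>t\<in>Op ` ?L l. teval Psi t a) = (\<Sum>ts\<in>?L l. teval Psi (Op ts) a)"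
      by (subst sum.reindex) (auto simp: inj_on_def)
    also have "\<dots> = (\<Sum>ts\<in>?L l. Psi l (map (\<lambda>t. teval Psi t a) ts))" by (rule sum.cong) auto
    finally show "(\<Sum>t\<in>Op ` ?L l. teval Psi t a) = (\<Sum>ts\<in>?L l. Psi l (map (\<lambda>t. teval Psi t a) ts))" .
  qed
  also have "\<dots> = PP (xk k a)"
    unfolding PP_def xk_def
  proof (rule sum.cong[OF refl])
    fix l assume l: "l \<in> {2..m}"
    show "(\<Sum>ts\<in>?L l. Psi l (map (\<lambda>t. teval Psi t a) ts)) = Psi l (replicate l (\<Sum>t\<in>Dset k. teval Psi t a))"
      using ml_expand[OF PsiML[OF l] finite_Dset, of "[]" l "\<lambda>t. teval Psi t a"] by simp
  qed
  finally show ?thesis .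
qed

lemma Sq_hom: "Sq q (scale c a) = scale (c ^ q) (Sq q a)"
  unfolding Sq_def scale_sum_right
  by (rule sum.cong[OF refl]) (auto simp: terms_of_size_def teval_hom)

lemma xk_expand: "lord (k + 2) (\<lambda>x. xk k (scale x a) - (\<Sum>q\<le>k+1. scale (x^q) (Sq q a)))"
proof -
  let ?A = "{t\<in>Dset k. tsize t \<le> k + 1}" and ?B = "{t\<in>Dset k. \<not> tsize t \<le> k + 1}"
  have eq: "xk k (scale x a) - (\<Sum>q\<le>k+1. scale (x^q) (Sq q a)) = (\<Sum>t\<in>?B. scale (x ^ tsize t) (teval Psi t a))" for x
  proof -
    have "xk k (scale x a) = (\<Sum>t\<in>Dset k. scale (x ^ tsize t) (teval Psi t a))"
      unfolding xk_def by (rule sum.cong[OF refl]) (auto intro: teval_hom Dset_wf)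
    also have "\<dots> = (\<Sum>t\<in>?A \<union> ?B. scale (x ^ tsize t) (teval Psi t a))"
      by (rule sum.cong) auto
    also have "\<dots> = (\<Sum>t\<in>?A. scale (x ^ tsize t) (teval Psi t a)) + (\<Sum>t\<in>?B. scale (x ^ tsize t) (teval Psi t a))"
      by (rule sum.union_disjoint) (auto simp: finite_Dset)
    also have "(\<Sum>t\<in>?A. scale (x ^ tsize t) (teval Psi t a)) = (\<Sum>q\<le>k+1. \<Sum>t\<in>{t\<in>?A. tsize t = q}. scale (x ^ tsize t) (teval Psi t a))"
      by (rule sum.group[symmetric]) (auto simp: finite_Dset)
    also have "\<dots> = (\<Sum>q\<le>k+1. scale (x^q) (Sq q a))"
    proof (rule sum.cong[OF refl])
      fix q assume q: "q \<in> {..k+1}"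
      have "{t\<in>?A. tsize t = q} = terms_of_size m q"
        using terms_of_size_sub[of q k] q by (auto simp: terms_of_size_def Dset_wf)
      then show "(\<Sum>t\<in>{t\<in>?A. tsize t = q}. scale (x ^ tsize t) (teval Psi t a)) = scale (x^q) (Sq q a)"
        by (simp add: Sq_def scale_sum_right terms_of_size_def)
    qed
    finally show ?thesis by (simp add: algebra_simps)
  qed
  have L: "lord (k+2) (\<lambda>x. \<Sum>t\<in>?B. scale (x ^ tsize t) (teval Psi t a))"
    by (rule lord_sum) (auto intro: lord_monom')
  have fe: "(\<lambda>x. xk k (scale x a) - (\<Sum>q\<le>k+1. scale (x^q) (Sq q a))) = (\<lambda>x. \<Sum>t\<in>?B. scale (x ^ tsize t) (teval Psi t a))"
    by (rule ext) (rule eq)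
  show ?thesis unfolding fe by (rule L)
qed

end


context yz begin

lemma PP_zero: "PP 0 = 0"
  unfolding PP_def
proof (rule sum.neutral, rule ballI)
  fix l assume l: "l \<in> {2..m}"
  have "replicate l (0::'v) = [] @ 0 # replicate (l - 1) 0" using l by (cases l) auto
  then show "Psi l (replicate l 0) = 0" using ml_zero[OF PsiML[OF l], of "[]" "replicate (l-1) 0"] l by simp
qed

lemma lpoly_PP: "lpoly p \<Longrightarrow> lpoly (\<lambda>x. PP (p x))"
  unfolding PP_def
proof (rule lpoly_sum)
  fix l assume p: "lpoly p" and l: "l \<in> {2..m}"
  have "lpoly (\<lambda>x. Psi l (map (\<lambda>q. q x) (replicate l p)))"
    by (rule lpoly_ml'[OF PsiML[OF l]]) (use p in auto)
  then show "lpoly (\<lambda>x. Psi l (replicate l (p x)))" by simp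
qed

lemma PP_diff:
  assumes u: "lord 1 u" and v: "lord 1 v" and uv: "lord N (\<lambda>x. u x - v x)"
  shows "lord (Suc N) (\<lambda>x. PP (u x) - PP (v x))"
proof -
  have "lord (Suc N) (\<lambda>x. \<Sum>l=2..m. Psi l (replicate l (u x)) - Psi l (replicate l (v x)))"
  proof (rule lord_sum)
    fix l assume l: "l \<in> {2..m}"
    have "lord (N + (l - 1) * 1) (\<lambda>x. Psi l (replicate l (u x)) - Psi l (replicate l (v x)))"
      by (rule lord_ml_diff[OF PsiML[OF l] u v uv])
    then show "lord (Suc N) (\<lambda>x. Psi l (replicate l (u x)) - Psi l (replicate l (v x)))"
      by (rule lord_mono) (use l in auto)
  qed
  then show ?thesis unfolding PP_def by (simp add: sum_subtractf)
qed

lemma lord1_xk: "lord 1 (\<lambda>x. xk k (scale x a))"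
proof -
  have "lord 1 (\<lambda>x. \<Sum>t\<in>Dset k. scale (x ^ tsize t) (teval Psi t a))"
    by (rule lord_sum, rule lord_monom') (use wf_size_pos Dset_wf in auto)
  moreover have "(\<lambda>x. xk k (scale x a)) = (\<lambda>x. \<Sum>t\<in>Dset k. scale (x ^ tsize t) (teval Psi t a))"
    unfolding xk_def by (rule ext, rule sum.cong[OF refl]) (auto intro: teval_hom Dset_wf)
  ultimately show ?thesis by simp
qed

definition TT :: "nat \<Rightarrow> 'v \<Rightarrow> 'k \<Rightarrow> 'v" where "TT n a x = (\<Sum>q\<le>n. scale (x^q) (Sq q a))"

lemma xk_expand': "lord (k + 2) (\<lambda>x. xk k (scale x a) - TT (k+1) a x)"
  unfolding TT_def by (rule xk_expand)

lemma xk_diff: "lord (k + 2) (\<lambda>x. xk (Suc k) (scale x a) - xk k (scale x a))"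
proof -
  have e1: "lord (k + 2) (\<lambda>x. xk (Suc k) (scale x a) - TT (Suc k + 1) a x)"
    by (rule lord_mono[OF xk_expand']) simp
  have e2: "lord (k + 2) (\<lambda>x. xk k (scale x a) - TT (k+1) a x)" by (rule xk_expand')
  have e3: "lord (k + 2) (\<lambda>x. TT (Suc k + 1) a x - TT (k+1) a x)"
  proof -
    have "TT (Suc k + 1) a x - TT (k+1) a x = scale (x^(k+2)) (Sq (k+2) a)" for x
      unfolding TT_def by simp
    then show ?thesis using lord_monom[of "k+2" "Sq (k+2) a"] by simp
  qed
  have "lord (k+2) (\<lambda>x. (xk (Suc k) (scale x a) - TT (Suc k + 1) a x) - (xk k (scale x a) - TT (k+1) a x)
     + (TT (Suc k + 1) a x - TT (k+1) a x))"
    by (intro lord_add lord_diff e1 e2 e3)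
  then show ?thesis by (simp add: algebra_simps)
qed

lemma F_step: "lord (Suc (Suc (Suc k))) (\<lambda>x. (xk (Suc k) (scale x a) - PP (xk (Suc k) (scale x a))) - scale x a)"
proof -
  have "lord (Suc (k+2)) (\<lambda>x. PP (xk k (scale x a)) - PP (xk (Suc k) (scale x a)))"
    by (rule PP_diff[OF lord1_xk lord1_xk]) (use lord_neg[OF xk_diff] in simp)
  then show ?thesis by (simp add: xk_rec algebra_simps)
qed

end


context yz begin

definition sub :: "('v list \<Rightarrow> 'v) \<Rightarrow> nat \<Rightarrow> nat \<Rightarrow> ('v list \<Rightarrow> 'v) \<Rightarrow> 'v list \<Rightarrow> 'v" where
  "sub f i n g zs = f (take i zs @ g (take n (drop i zs)) # drop (i+n) zs)"

lemma sub_eq: "length As = i \<Longrightarrow> length Bs = n \<Longrightarrow> sub f i n g (As @ Bs @ Cs) = f (As @ g Bs # Cs)"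
  unfolding sub_def by simp

lemma sub_slot:
  assumes len: "length xs + length ys + 1 = i + n + r"
  shows "(\<exists>P Q. length P + length Q + 1 = i + 1 + r \<and> (\<forall>c. sub f i n g (xs @ c # ys) = f (P @ c # Q))) \<or>
         (\<exists>P Q R S. length P + length Q + 1 = i + 1 + r \<and> length R + length S + 1 = n \<and>
             (\<forall>c. sub f i n g (xs @ c # ys) = f (P @ g (R @ c # S) # Q)))"
proof -
  let ?p = "length xs"
  consider (A) "?p < i" | (B) "i \<le> ?p" "?p < i + n" | (C) "i + n \<le> ?p" by linarith
  then show ?thesis
  proof cases
    case A
    define k where "k = i - ?p - 1"
    define ys1 where "ys1 = take k ys"
    define ys2 where "ys2 = drop k ys"
    have l1: "length ys1 = k" using len A by (simp add: ys1_def k_def)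
    have l2: "length ys2 = n + r" using len A by (simp add: ys2_def k_def)
    have "sub f i n g (xs @ c # ys) = f (xs @ c # (ys1 @ g (take n ys2) # drop n ys2))" for c
    proof -
      have e: "xs @ c # ys = (xs @ c # ys1) @ take n ys2 @ drop n ys2" by (simp add: ys1_def ys2_def del: drop_drop)
      show ?thesis unfolding e by (subst sub_eq) (use l1 A l2 in \<open>simp_all add: k_def\<close>)
    qed
    moreover have "length xs + length (ys1 @ g (take n ys2) # drop n ys2) + 1 = i + 1 + r"
      using l1 l2 A by (simp add: k_def)
    ultimately show ?thesis by blast
  next
    case B
    define xs1 where "xs1 = take i xs"
    define xs2 where "xs2 = drop i xs"
    define k where "k = n - (?p - i) - 1"
    define ys1 where "ys1 = take k ys"
    define ys2 where "ys2 = drop k ys"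
    have l0: "length xs1 = i" "length xs2 = ?p - i" using B by (simp_all add: xs1_def xs2_def)
    have l1: "length ys1 = k" using len B by (simp add: ys1_def k_def)
    have l2: "length ys2 = r" using len B by (simp add: ys2_def k_def)
    have "sub f i n g (xs @ c # ys) = f (xs1 @ g (xs2 @ c # ys1) # ys2)" for c
    proof -
      have e: "xs @ c # ys = xs1 @ (xs2 @ c # ys1) @ ys2" by (simp add: xs1_def xs2_def ys1_def ys2_def)
      have "length (xs2 @ c # ys1) = n" using l0 l1 B by (simp add: k_def)
      then show ?thesis unfolding e using l0 by (subst sub_eq) simp_all
    qed
    moreover have "length xs1 + length ys2 + 1 = i + 1 + r" using l0 l2 by simp
    moreover have "length xs2 + length ys1 + 1 = n" using l0 l1 B by (simp add: k_def)
    ultimately show ?thesis by blast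
  next
    case C
    define xs1 where "xs1 = take i xs"
    define xs2 where "xs2 = take n (drop i xs)"
    define xs3 where "xs3 = drop (i + n) xs"
    have l0: "length xs1 = i" "length xs2 = n" "length xs3 = ?p - i - n" using C by (simp_all add: xs1_def xs2_def xs3_def)
    have "sub f i n g (xs @ c # ys) = f ((xs1 @ g xs2 # xs3) @ c # ys)" for c
    proof -
      have "xs = xs1 @ xs2 @ xs3"
        by (simp add: xs1_def xs2_def xs3_def) (metis append_take_drop_id drop_drop add.commute)
      then have e: "xs @ c # ys = xs1 @ xs2 @ (xs3 @ c # ys)" by simp
      show ?thesis unfolding e using l0 by (subst sub_eq) simp_all
    qed
    moreover have "length (xs1 @ g xs2 # xs3) + length ys + 1 = i + 1 + r" using l0 len C by simp
    ultimately show ?thesis by blast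
  qed
qed

lemma ml_subst:
  assumes f: "multilinear scale (i + 1 + r) f" and g: "multilinear scale n g"
  shows "multilinear scale (i + n + r) (sub f i n g)"
proof (rule ml_intro)
  fix xs ys :: "'v list" and a b assume len: "length xs + length ys + 1 = i + n + r"
  from sub_slot[OF len, of f g]
  show "sub f i n g (xs @ (a + b) # ys) = sub f i n g (xs @ a # ys) + sub f i n g (xs @ b # ys)"
  proof (elim disjE exE conjE)
    fix P Q assume l: "length P + length Q + 1 = i + 1 + r" and e: "\<forall>c. sub f i n g (xs @ c # ys) = f (P @ c # Q)"
    show ?thesis using ml_add[OF f l] e by simp
  next
    fix P Q R S assume l: "length P + length Q + 1 = i + 1 + r" and l': "length R + length S + 1 = n"
      and e: "\<forall>c. sub f i n g (xs @ c # ys) = f (P @ g (R @ c # S) # Q)"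
    show ?thesis using ml_add[OF f l] ml_add[OF g l'] e by simp
  qed
next
  fix xs ys :: "'v list" and c a assume len: "length xs + length ys + 1 = i + n + r"
  from sub_slot[OF len, of f g]
  show "sub f i n g (xs @ scale c a # ys) = scale c (sub f i n g (xs @ a # ys))"
  proof (elim disjE exE conjE)
    fix P Q assume l: "length P + length Q + 1 = i + 1 + r" and e: "\<forall>c. sub f i n g (xs @ c # ys) = f (P @ c # Q)"
    show ?thesis using ml_scale[OF f l] e by simp
  next
    fix P Q R S assume l: "length P + length Q + 1 = i + 1 + r" and l': "length R + length S + 1 = n"
      and e: "\<forall>c. sub f i n g (xs @ c # ys) = f (P @ g (R @ c # S) # Q)"
    show ?thesis using ml_scale[OF f l] ml_scale[OF g l'] e by simp
  qed
qed

lemma ml_comp: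
  "multilinear scale (k + length ps) f \<Longrightarrow> (\<forall>(n,\<phi>)\<in>set ps. multilinear scale n \<phi>) \<Longrightarrow>
   \<exists>g. multilinear scale (k + sum_list (map fst ps)) g \<and>
     (\<forall>y. g (replicate (k + sum_list (map fst ps)) y) = f (replicate k y @ map (\<lambda>(n,\<phi>). \<phi> (replicate n y)) ps))"
proof (induction ps arbitrary: k f)
  case Nil then show ?case by (intro exI[of _ f]) simp
next
  case (Cons np ps)
  obtain n \<phi> where np: "np = (n, \<phi>)" by fastforce
  have phi: "multilinear scale n \<phi>" using Cons.prems np by simp
  have f: "multilinear scale (k + 1 + length ps) f" using Cons.prems by simp
  have "multilinear scale (k + n + length ps) (sub f k n \<phi>)" by (rule ml_subst[OF f phi])
  then obtain g where g: "multilinear scale (k + n + sum_list (map fst ps)) g"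
    "\<forall>y. g (replicate (k + n + sum_list (map fst ps)) y) =
       sub f k n \<phi> (replicate (k + n) y @ map (\<lambda>(n,\<phi>). \<phi> (replicate n y)) ps)"
    using Cons.IH[of "k + n" "sub f k n \<phi>"] Cons.prems by auto
  have "g (replicate (k + sum_list (map fst (np # ps))) y) =
      f (replicate k y @ map (\<lambda>(n,\<phi>). \<phi> (replicate n y)) (np # ps))" for y
  proof -
    have "replicate (k + n) y @ map (\<lambda>(n,\<phi>). \<phi> (replicate n y)) ps =
      replicate k y @ replicate n y @ map (\<lambda>(n,\<phi>). \<phi> (replicate n y)) ps" by (simp add: replicate_add)
    then show ?thesis using g(2) np by (simp add: sub_eq add.assoc)
  qed
  moreover have "multilinear scale (k + sum_list (map fst (np # ps))) g" using g(1) np by (simp add: add.assoc)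
  ultimately show ?case by blast
qed

lemma ml_hd: "multilinear scale 1 hd"
  by (rule ml_intro) auto

lemma ml_0: "multilinear scale n (\<lambda>xs. 0)"
  by (rule ml_intro) auto

lemma ml_plus: "multilinear scale n f \<Longrightarrow> multilinear scale n g \<Longrightarrow> multilinear scale n (\<lambda>xs. f xs + g xs)"
  by (rule ml_intro) (auto simp: ml_add ml_scale scale_right_distrib)

lemma ml_uminus: "multilinear scale n f \<Longrightarrow> multilinear scale n (\<lambda>xs. - f xs)"
  by (rule ml_intro) (auto simp: ml_add ml_scale)

definition hom :: "nat \<Rightarrow> ('v \<Rightarrow> 'v) \<Rightarrow> bool" where
  "hom n h \<longleftrightarrow> (\<exists>\<phi>. multilinear scale n \<phi> \<and> (\<forall>y. h y = \<phi> (replicate n y)))"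

lemma hom_teval: "wf_term m t \<Longrightarrow> hom (tsize t) (teval Psi t)"
proof (induction t)
  case X then show ?case unfolding hom_def using ml_hd by (intro exI[of _ hd]) simp
next
  case (Op ts)
  define ph where "ph t = (SOME \<phi>. multilinear scale (tsize t) \<phi> \<and> (\<forall>y. teval Psi t y = \<phi> (replicate (tsize t) y)))" for t
  have ph: "multilinear scale (tsize t) (ph t) \<and> (\<forall>y. teval Psi t y = ph t (replicate (tsize t) y))" if "t \<in> set ts" for t
  proof -
    have "hom (tsize t) (teval Psi t)" using Op that by auto
    then show ?thesis unfolding hom_def ph_def by (rule someI_ex)
  qed
  have ml: "multilinear scale (0 + length (map (\<lambda>t. (tsize t, ph t)) ts)) (Psi (length ts))"
    using Op.prems PsiML by simp
  obtain g where g: "multilinear scale (0 + sum_list (map fst (map (\<lambda>t. (tsize t, ph t)) ts))) g"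
    "\<forall>y. g (replicate (0 + sum_list (map fst (map (\<lambda>t. (tsize t, ph t)) ts))) y) =
       Psi (length ts) (replicate 0 y @ map (\<lambda>(n,\<phi>). \<phi> (replicate n y)) (map (\<lambda>t. (tsize t, ph t)) ts))"
    using ml_comp[OF ml] ph by auto
  have "teval Psi (Op ts) y = g (replicate (tsize (Op ts)) y)" for y
  proof -
    have me: "map (\<lambda>t. teval Psi t y) ts = map (\<lambda>t. ph t (replicate (tsize t) y)) ts"
      using ph by (intro map_cong) auto
    have "teval Psi (Op ts) y = Psi (length ts) (map (\<lambda>t. teval Psi t y) ts)" by simp
    also have "\<dots> = Psi (length ts) (map (\<lambda>t. ph t (replicate (tsize t) y)) ts)" by (simp only: me)
    also have "\<dots> = g (replicate (tsize (Op ts)) y)" using g(2) by (simp add: comp_def)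
    finally show ?thesis .
  qed
  moreover have "multilinear scale (tsize (Op ts)) g" using g(1) by (simp add: comp_def)
  ultimately show ?case unfolding hom_def by blast
qed

lemma hom_sum: "(\<And>i. i \<in> I \<Longrightarrow> hom n (h i)) \<Longrightarrow> hom n (\<lambda>y. \<Sum>i\<in>I. h i y)"
proof (induction I rule: infinite_finite_induct)
  case (infinite A) then show ?case unfolding hom_def using ml_0 by auto
next
  case empty then show ?case unfolding hom_def using ml_0 by auto
next
  case (insert i F)
  obtain \<phi> where "multilinear scale n \<phi>" "\<forall>y. h i y = \<phi> (replicate n y)" using insert.prems unfolding hom_def by blast
  moreover obtain \<psi> where "multilinear scale n \<psi>" "\<forall>y. (\<Sum>i\<in>F. h i y) = \<psi> (replicate n y)"
    using insert unfolding hom_def by blast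
  ultimately show ?case using insert.hyps unfolding hom_def
    by (intro exI[of _ "\<lambda>xs. \<phi> xs + \<psi> xs"]) (simp add: ml_plus)
qed

lemma hom_Sq: "hom q (Sq q)"
proof -
  have "hom q (\<lambda>y. \<Sum>t\<in>terms_of_size m q. teval Psi t y)"
    by (rule hom_sum) (use hom_teval in \<open>auto simp: terms_of_size_def\<close>)
  then show ?thesis unfolding Sq_def by (simp add: fun_eq_iff[symmetric])
qed

lemma poly_map_G: "poly_map scale (\<lambda>y. \<Sum>q\<le>d. Sq q y)"
proof -
  have "\<forall>q. \<exists>\<phi>. multilinear scale q \<phi> \<and> (\<forall>y. Sq q y = \<phi> (replicate q y))"
    using hom_Sq unfolding hom_def by blast
  then obtain \<Phi> where \<Phi>: "\<And>q. multilinear scale q (\<Phi> q)" "\<And>q y. Sq q y = \<Phi> q (replicate q y)"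
    by metis
  show ?thesis unfolding poly_map_def
    by (intro exI[of _ d] exI[of _ \<Phi>]) (simp add: \<Phi>)
qed

lemma poly_map_F: "poly_map scale (\<lambda>y. y - PP y)"
proof -
  define \<Phi> where "\<Phi> l = (if l = 1 then hd else if l \<in> {2..m} then (\<lambda>xs. - Psi l xs) else (\<lambda>xs. 0))" for l
  have ml: "multilinear scale l (\<Phi> l)" for l
    unfolding \<Phi>_def using ml_hd ml_0 ml_uminus[OF PsiML] by auto
  have "y - PP y = (\<Sum>l\<le>m. \<Phi> l (replicate l y))" for y
  proof -
    have "{..m} = insert 0 (insert 1 {2..m})" using m2 by auto
    then have "(\<Sum>l\<le>m. \<Phi> l (replicate l y)) = \<Phi> 0 [] + (\<Phi> 1 [y] + (\<Sum>l=2..m. \<Phi> l (replicate l y)))"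
      by (simp add: sum.insert)
    also have "(\<Sum>l=2..m. \<Phi> l (replicate l y)) = - PP y"
      unfolding PP_def sum_negf[symmetric] by (rule sum.cong) (auto simp: \<Phi>_def)
    finally show ?thesis by (simp add: \<Phi>_def)
  qed
  then show ?thesis unfolding poly_map_def using ml by (intro exI[of _ m] exI[of _ \<Phi>]) auto
qed

end


context yz begin

lemma Sq0: "Sq 0 a = 0"
  unfolding Sq_def terms_of_size_0 by simp

lemma TT_stab:
  assumes Y: "\<forall>q\<ge>q0. \<forall>a. Sq q a = 0" and n: "q0 \<le> n"
  shows "TT n a x = TT q0 a x"
  unfolding TT_def
  by (rule sum.mono_neutral_right) (use n Y in auto)

lemma TT_lord1: "lord 1 (TT n a)"
proof -
  have "lord 1 (\<lambda>x. \<Sum>q\<le>n. scale (x^q) (Sq q a))"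
  proof (rule lord_sum)
    fix q show "lord 1 (\<lambda>x. scale (x^q) (Sq q a))"
      by (cases "q = 0") (auto simp: Sq0 lord_zero intro: lord_monom')
  qed
  then show ?thesis unfolding TT_def[abs_def] by simp
qed

lemma backward:
  assumes Y: "\<forall>q\<ge>q0. \<forall>a. Sq q a = 0"
  shows "poly_automorphism scale (\<lambda>y. y - PP y)"
proof -
  define G where "G y = (\<Sum>q\<le>q0. Sq q y)" for y
  have Glam: "G (scale x a) = TT q0 a x" for x a
    unfolding G_def TT_def by (simp add: Sq_hom)
  have FG: "G a - PP (G a) = a" for a
  proof -
    define p where "p x = (G (scale x a) - PP (G (scale x a))) - scale x a" for x
    have lG: "lord 1 (\<lambda>x. G (scale x a))" unfolding Glam using TT_lord1 by (simp add: fun_eq_iff[symmetric])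
    have lpG: "lpoly (\<lambda>x. G (scale x a))" using lord_lpoly[OF lG] .
    have lsa: "lpoly (\<lambda>x. scale x a)" using lpoly_x[OF lpoly_const] .
    have lp: "lpoly p" unfolding p_def[abs_def] by (intro lpoly_diff lpoly_PP lpG lsa)
    have "lord N p" for N
    proof -
      define K where "K = N + q0"
      define v where "v x = xk (Suc K) (scale x a)" for x
      have lv: "lord 1 v" unfolding v_def[abs_def] by (rule lord1_xk)
      have s1: "lord (Suc (Suc (Suc K))) (\<lambda>x. (v x - PP (v x)) - scale x a)"
        unfolding v_def by (rule F_step)
      have s2: "lord (Suc K + 2) (\<lambda>x. v x - TT (Suc K + 1) a x)"
        unfolding v_def by (rule xk_expand')
      have "TT (Suc K + 1) a x = G (scale x a)" for x
        using TT_stab[OF Y, of "Suc K + 1" a x] Glam[of x a] by (simp add: K_def)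
      then have s2': "lord (Suc (Suc (Suc K))) (\<lambda>x. G (scale x a) - v x)"
        using lord_neg[OF s2] by simp
      have s3: "lord (Suc (Suc (Suc (Suc K)))) (\<lambda>x. PP (G (scale x a)) - PP (v x))"
        by (rule PP_diff[OF lG lv s2'])
      have "lord (Suc (Suc (Suc K))) (\<lambda>x. ((G (scale x a) - v x) - (PP (G (scale x a)) - PP (v x))) + ((v x - PP (v x)) - scale x a))"
        by (intro lord_add lord_diff s1 s2' lord_mono[OF s3]) simp
      moreover have "(\<lambda>x. ((G (scale x a) - v x) - (PP (G (scale x a)) - PP (v x))) + ((v x - PP (v x)) - scale x a)) = p"
        unfolding p_def by (rule ext) (simp add: algebra_simps)
      ultimately have "lord (Suc (Suc (Suc K))) p" by simp
      then show ?thesis by (rule lord_mono) (simp add: K_def)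
    qed
    then have "p 1 = 0" using lord_all_zero[OF lp] by blast
    then show ?thesis unfolding p_def by simp
  qed
  have G0: "G 0 = 0"
    unfolding G_def Sq_def by (auto intro!: sum.neutral simp: terms_of_size_def teval_zero)
  have GF: "G (a - PP a) = a" for a
  proof -
    define u where "u x = G (scale x a - PP (scale x a))" for x
    define v where "v x = scale x a" for x
    have lsa: "lpoly (\<lambda>x. scale x a - PP (scale x a))"
      by (intro lpoly_diff lpoly_PP lpoly_x[OF lpoly_const])
    have lu: "lpoly u"
      unfolding u_def[abs_def] G_def Sq_def
      by (intro lpoly_sum lpoly_teval lsa) (auto simp: terms_of_size_def)
    have u0: "u 0 = 0" unfolding u_def using G0 PP_zero by simp
    have lu1: "lord 1 u"
    proof -
      obtain r where "lpoly r" "\<forall>x. u x = u 0 + scale x (r x)" using lpoly_eval0[OF lu] by blast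
      then show ?thesis unfolding lord_def using u0 by (intro exI[of _ r]) simp
    qed
    have lv1: "lord 1 v" unfolding v_def[abs_def] using lord_monom[of 1 a] by simp
    have Feq: "u x - PP (u x) = v x - PP (v x)" for x
      unfolding u_def v_def by (rule FG)
    have "lord N (\<lambda>x. u x - v x)" for N
    proof (induction N)
      case 0 then show ?case unfolding lord_0 by (intro lpoly_diff lu lord_lpoly[OF lv1])
    next
      case (Suc N)
      have "lord (Suc N) (\<lambda>x. PP (u x) - PP (v x))" by (rule PP_diff[OF lu1 lv1 Suc.IH])
      moreover have "(\<lambda>x. PP (u x) - PP (v x)) = (\<lambda>x. u x - v x)"
      proof (rule ext)
        fix x show "PP (u x) - PP (v x) = u x - v x" using Feq[of x] by (simp add: algebra_simps)
      qed
      ultimately show ?case by simp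
    qed
    then have "u 1 - v 1 = 0" using lord_all_zero[OF lpoly_diff[OF lu lord_lpoly[OF lv1]]] by blast
    then show ?thesis unfolding u_def v_def by simp
  qed
  have "poly_map scale G" unfolding G_def[abs_def] by (rule poly_map_G)
  then show ?thesis unfolding poly_automorphism_def
    using poly_map_F FG GF by blast
qed

lemma forward:
  assumes PA: "poly_automorphism scale (\<lambda>y. y - PP y)"
  shows "\<exists>q0. \<forall>q\<ge>q0. \<forall>a. Sq q a = 0"
proof -
  obtain G where pmG: "poly_map scale G" and GF: "\<forall>x. G (x - PP x) = x"
    using PA unfolding poly_automorphism_def by blast
  obtain d \<Phi> where ml: "\<forall>l\<le>d. multilinear scale l (\<Phi> l)" and Gd: "G = (\<lambda>x. \<Sum>l\<le>d. \<Phi> l (replicate l x))"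
    using pmG unfolding poly_map_def by blast
  have "Sq q a = 0" if q: "q \<ge> Suc d" for q a
  proof -
    define K where "K = q"
    define v where "v x = xk (Suc K) (scale x a)" for x
    define w where "w x = v x - PP (v x)" for x
    define c where "c l = \<Phi> l (replicate l a)" for l
    have lv: "lord 1 v" unfolding v_def[abs_def] by (rule lord1_xk)
    have lw: "lpoly w" unfolding w_def[abs_def] by (intro lpoly_diff lpoly_PP lord_lpoly[OF lv])
    have lsa: "lpoly (\<lambda>x. scale x a)" using lpoly_x[OF lpoly_const] .
    have s1: "lord (Suc (Suc (Suc K))) (\<lambda>x. w x - scale x a)"
      unfolding w_def v_def by (rule F_step)
    have Gw: "G (w x) = v x" for x unfolding w_def using GF by simp
    have Gs: "G (scale x a) = (\<Sum>l\<le>d. scale (x^l) (c l))" for x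
      unfolding Gd c_def using ml by (auto intro!: sum.cong ml_rep_scale)
    have s2: "lord (Suc (Suc (Suc K))) (\<lambda>x. G (w x) - G (scale x a))"
    proof -
      have "lord (Suc (Suc (Suc K))) (\<lambda>x. \<Sum>l\<le>d. \<Phi> l (replicate l (w x)) - \<Phi> l (replicate l (scale x a)))"
      proof (rule lord_sum)
        fix l assume "l \<in> {..d}"
        then have "multilinear scale l (\<Phi> l)" using ml by simp
        from lord_ml_diff[OF this, of 0 w "\<lambda>x. scale x a"] lw lsa s1
        show "lord (Suc (Suc (Suc K))) (\<lambda>x. \<Phi> l (replicate l (w x)) - \<Phi> l (replicate l (scale x a)))"
          by (simp add: lord_0)
      qed
      then show ?thesis unfolding Gd by (simp add: sum_subtractf)
    qed
    have s3: "lord (Suc (Suc (Suc K))) (\<lambda>x. v x - TT (Suc K + 1) a x)"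
      using xk_expand'[of "Suc K" a] unfolding v_def by simp
    have "lord (Suc (Suc (Suc K))) (\<lambda>x. (G (w x) - G (scale x a)) - (v x - TT (Suc K + 1) a x))"
      using lord_diff[OF s2 s3] by simp
    moreover have "(G (w x) - G (scale x a)) - (v x - TT (Suc K + 1) a x) =
        (\<Sum>j\<le>K+2. scale (x^j) (Sq j a - (if j \<le> d then c j else 0)))" for x
    proof -
      have "(\<Sum>l\<le>d. scale (x^l) (c l)) = (\<Sum>j\<le>K+2. scale (x^j) (if j \<le> d then c j else 0))"
        by (rule sum.mono_neutral_cong_right[symmetric]) (use q in \<open>auto simp: K_def\<close>)
      then show ?thesis
        by (simp add: Gw Gs TT_def scale_right_diff_distrib sum_subtractf)
    qed
    ultimately have "lord (Suc (Suc (Suc K))) (\<lambda>x. \<Sum>j\<le>K+2. scale (x^j) (Sq j a - (if j \<le> d then c j else 0)))"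
      by simp
    then obtain r where r: "lpoly r" "\<forall>x. (\<Sum>j\<le>K+2. scale (x^j) (Sq j a - (if j \<le> d then c j else 0))) = scale (x^(Suc (Suc (Suc K)))) (r x)"
      unfolding lord_def by blast
    have "Sq q a - (if q \<le> d then c q else 0) = 0"
      by (rule coeff_compare[where n="K+2" and N="Suc (Suc (Suc K))" and r=r]) (use r in \<open>auto simp: K_def\<close>)
    then show ?thesis using q by simp
  qed
  then show ?thesis by blast
qed

end

theorem mainTheorem1:
  fixes scale :: "'k::field_char_0 \<Rightarrow> 'v::ab_group_add \<Rightarrow> 'v"
    and B :: "'v set"
    and m :: nat
    and Psi :: "nat \<Rightarrow> 'v list \<Rightarrow> 'v"
  assumes "finite_dimensional_vector_space scale B"
    and "m \<ge> 2"
    and "\<forall>l\<in>{2..m}. multilinear scale l (Psi l) \<and> symmetric_map l (Psi l)"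
  shows "poly_automorphism scale (\<lambda>x. x - (\<Sum>l=2..m. Psi l (replicate l x)))
         \<longleftrightarrow> (\<exists>q0. yagzhev_of_order m Psi q0)"
proof -
  interpret Y: yz scale B m Psi
    by (rule yz.intro[OF assms(1)]) (unfold yz_axioms_def, use assms(2,3) in auto)
  have F: "(\<lambda>x. x - (\<Sum>l=2..m. Psi l (replicate l x))) = (\<lambda>y. y - Y.PP y)"
    by (simp add: Y.PP_def)
  have Yg: "yagzhev_of_order m Psi q0 \<longleftrightarrow> (\<forall>q\<ge>q0. \<forall>a. Y.Sq q a = 0)" for q0
    by (simp add: yagzhev_of_order_def Y.Sq_def)
  show ?thesis unfolding F Yg using Y.forward Y.backward by blast
qed


end
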